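(* For $N\in\omega$ let $T_N=\{0,1\}^{\le N}$ be the set of $0$-$1$ sequences of length at most $N$ (including the empty sequence); for $s\in\{0,1\}^N$ let $F_s=\{s{\upharpoonright}k: k\le N\}\subseteq T_N$, and let $\mathcal{F}_N$ be the hereditary closure of $\{F_s: s\in\{0,1\}^N\}$. Let $x=\sum_{s\in\{0,1\}^N}\chi_{F_s}\in\mathbb{R}^{T_N}$. Then $\lVert x\rVert^{\mathcal{F}_N}=2^N(1+N/2)$, while $\lVert\chi_{F_s}\rVert^{\mathcal{F}_N}=1$ for each $s$. Consequently, if $T$ is the disjoint union of the sets $T_N$ ($N\in\omega$) (identified with $\omega$ via a bijection) and $\mathcal{F}=\bigcup_N\mathcal{F}_N$, then $\mathcal{F}$ is a compact hereditary family of finite sets covering $T$, there is no constant $C>0$ such that $\lVert\sum_{i\le n}x_i\rVert^{\mathcal{F}}\le C\sum_{i\le n}\lVert x_i\rVert^{\mathcal{F}}$ for all finite families $x_1,\dots,x_n\in c_{00}$, and $X^\mathcal{F}$ is not isomorphic to $X_\mathcal{F}^*$.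
   Context: For a countable index set $I$ and a family $\mathcal{F}$ of finite subsets of $I$ (hereditary: closed under subsets; covering $I$), a partition is a family $\mathcal{P}$ of subsets of $I$ with $\emptyset\in\mathcal{P}$, $\bigcup\mathcal{P}=I$, elements pairwise disjoint; $\mathbb{P}_\mathcal{F}$ is the set of partitions contained in $\mathcal{F}$; for $x\in\mathbb{R}^I$, $\lVert x\rVert^{\mathcal{F}}=\inf_{\mathcal{P}\in\mathbb{P}_\mathcal{F}}\sum_{F\in\mathcal{P}}\sup_{k\in F}|x(k)|$. The hereditary closure of a family is the smallest hereditary family containing it. $\chi_A$ is the characteristic function of $A$. $X^\mathcal{F}$ is the completion of $c_{00}$ (finitely supported sequences) under $\lVert\cdot\rVert^\mathcal{F}$, $X_\mathcal{F}$ the completion of $c_{00}$ under $\lVert x\rVert_\mathcal{F}=\sup_{F\in\mathcal{F}}\sum_{k\in F}|x(k)|$, and $X_\mathcal{F}^*$ its dual. Compactness refers to the topology of $2^I$. *)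

theory Defs
  imports "HOL-Analysis.Analysis"
begin

definition hereditary :: "'i set set \<Rightarrow> bool" where
  "hereditary Fam \<longleftrightarrow> (\<forall>A\<in>Fam. \<forall>B. B \<subseteq> A \<longrightarrow> B \<in> Fam)"

definition hered_closure :: "'i set set \<Rightarrow> 'i set set" where
  "hered_closure Fam = \<Inter>{G. hereditary G \<and> Fam \<subseteq> G}"

definition covers :: "'i set \<Rightarrow> 'i set set \<Rightarrow> bool" where
  "covers I Fam \<longleftrightarrow> (\<forall>A\<in>Fam. A \<subseteq> I) \<and> \<Union>Fam = I"

definition partitions :: "'i set \<Rightarrow> 'i set set set" where
  "partitions I = {P. {} \<in> P \<and> \<Union>P = I \<and> pairwise disjnt P}"

(* sup_{k in F} |x k|, with the convention 0 for F = {} (F is always finite here) *)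
definition supabs :: "('i \<Rightarrow> real) \<Rightarrow> 'i set \<Rightarrow> real" where
  "supabs x F = (if F = {} then 0 else Max ((\<lambda>k. \<bar>x k\<bar>) ` F))"

(* the upper norm ||x||^F, valued in [0,\<infinity>] (sum of non-negative terms over a possibly infinite partition) *)
definition upper_norm :: "'i set \<Rightarrow> 'i set set \<Rightarrow> ('i \<Rightarrow> real) \<Rightarrow> ennreal" where
  "upper_norm I Fam x =
     (INF P \<in> {P \<in> partitions I. P \<subseteq> Fam}. (\<Sum>\<^sub>\<infinity>F\<in>P. ennreal (supabs x F)))"

definition c00 :: "'i set \<Rightarrow> ('i \<Rightarrow> real) set" where
  "c00 I = {x. finite {k. x k \<noteq> 0} \<and> {k. x k \<noteq> 0} \<subseteq> I}"

definition lower_norm :: "'i set set \<Rightarrow> ('i \<Rightarrow> real) \<Rightarrow> ennreal" where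
  "lower_norm Fam x = (SUP F \<in> Fam. ennreal (\<Sum>k\<in>F. \<bar>x k\<bar>))"

(* the dual X_F^*: a bounded functional on X_F is determined by its values y k on unit vectors;
   dual norm = sup over the (dense) unit ball of c00 *)
definition dual_norm :: "'i set \<Rightarrow> 'i set set \<Rightarrow> ('i \<Rightarrow> real) \<Rightarrow> ennreal" where
  "dual_norm I Fam y = (SUP x \<in> {x \<in> c00 I. lower_norm Fam x \<le> 1}.
       ennreal \<bar>\<Sum>k\<in>{k. x k \<noteq> 0}. x k * y k\<bar>)"

definition dual_space :: "'i set \<Rightarrow> 'i set set \<Rightarrow> ('i \<Rightarrow> real) set" where
  "dual_space I Fam = {y. (\<forall>k. k \<notin> I \<longrightarrow> y k = 0) \<and> dual_norm I Fam y < \<infinity>}"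

(* X^F (completion of c00 under ||.||^F) is isomorphic to X_F^*:
   a linear map on the dense subspace c00, bounded above and below, with dense range *)
definition upper_iso_dual :: "'i set \<Rightarrow> 'i set set \<Rightarrow> bool" where
  "upper_iso_dual I Fam \<longleftrightarrow>
    (\<exists>T c C. c > 0 \<and> C > 0 \<and>
       (\<forall>x\<in>c00 I. T x \<in> dual_space I Fam) \<and>
       (\<forall>x\<in>c00 I. \<forall>y\<in>c00 I. \<forall>a b::real. T (\<lambda>k. a * x k + b * y k) = (\<lambda>k. a * T x k + b * T y k)) \<and>
       (\<forall>x\<in>c00 I. ennreal c * upper_norm I Fam x \<le> dual_norm I Fam (T x)
                 \<and> dual_norm I Fam (T x) \<le> ennreal C * upper_norm I Fam x) \<and>
       (\<forall>y\<in>dual_space I Fam. \<forall>e>0. \<exists>x\<in>c00 I. dual_norm I Fam (\<lambda>k. y k - T x k) < ennreal e))"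

definition compact_family :: "'i set \<Rightarrow> 'i set set \<Rightarrow> bool" where
  "compact_family I Fam \<longleftrightarrow>
     compactin (product_topology (\<lambda>_. discrete_topology (UNIV::bool set)) I)
               ((\<lambda>A. \<lambda>i\<in>I. i \<in> A) ` Fam)"

definition TN :: "nat \<Rightarrow> bool list set" where
  "TN N = {s. length s \<le> N}"

definition Fs :: "bool list \<Rightarrow> bool list set" where
  "Fs s = {take k s | k. k \<le> length s}"

definition FamN :: "nat \<Rightarrow> bool list set set" where
  "FamN N = hered_closure {Fs s | s. length s = N}"

definition xN :: "nat \<Rightarrow> bool list \<Rightarrow> real" where
  "xN N = (\<lambda>t. \<Sum>s\<in>{s. length s = N}. indicator (Fs s) t)"

definition Tall :: "(nat \<times> bool list) set" where
  "Tall = (SIGMA N:UNIV. TN N)"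

definition Famall :: "(nat \<times> bool list) set set" where
  "Famall = (\<Union>N. (\<lambda>A. Pair N ` A) ` FamN N)"

end

theory Submission
  imports Defs
begin

lemma infsum_ge_sum:
  fixes f :: "'a \<Rightarrow> ennreal"
  assumes "finite B" "B \<subseteq> P"
  shows "sum f B \<le> (\<Sum>\<^sub>\<infinity>A\<in>P. f A)"
proof -
  have "sum f B = (\<Sum>\<^sub>\<infinity>A\<in>B. f A)" using assms by simp
  also have "\<dots> \<le> (\<Sum>\<^sub>\<infinity>A\<in>P. f A)"
    by (rule infsum_mono_neutral) (use assms in \<open>auto intro: nonneg_summable_on_complete\<close>)
  finally show ?thesis .
qed

lemma hered_closure_char:
  assumes "\<forall>A\<in>G. \<forall>B\<subseteq>A. B \<in> S" "hereditary S" "\<forall>B\<in>S. \<exists>A\<in>G. B \<subseteq> A"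
  shows "hered_closure G = S"
proof
  show "hered_closure G \<subseteq> S" unfolding hered_closure_def using assms(1,2) by blast
  show "S \<subseteq> hered_closure G" unfolding hered_closure_def hereditary_def
    using assms(3) by blast
qed

lemma FamN_char: "FamN N = {A. \<exists>s. length s = N \<and> A \<subseteq> Fs s}"
  unfolding FamN_def
  by (rule hered_closure_char) (auto simp: hereditary_def)

lemma Famall_char: "Famall = {A. \<exists>N s. length s = N \<and> A \<subseteq> {N} \<times> Fs s}"
proof -
  have "A \<in> Famall \<longleftrightarrow> (\<exists>N s. length s = N \<and> A \<subseteq> {N} \<times> Fs s)" for A
  proof
    assume "A \<in> Famall"
    then show "\<exists>N s. length s = N \<and> A \<subseteq> {N} \<times> Fs s"
      unfolding Famall_def FamN_char by auto
  next
    assume "\<exists>N s. length s = N \<and> A \<subseteq> {N} \<times> Fs s"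
    then obtain N s where "length s = N" "A \<subseteq> {N} \<times> Fs s" by blast
    then have "A = Pair N ` (snd ` A)" "snd ` A \<in> FamN N" unfolding FamN_char by force+
    then show "A \<in> Famall" unfolding Famall_def by blast
  qed
  then show ?thesis by blast
qed

lemma mem_Fs: "t \<in> Fs s \<longleftrightarrow> take (length t) s = t"
  unfolding Fs_def by (auto simp: min_def) (metis length_take min.absorb4 nat_le_linear take_all)

lemma finite_Fs: "finite (Fs s)"
  unfolding Fs_def by simp

lemma Fs_sub_TN: "length s = N \<Longrightarrow> Fs s \<subseteq> TN N"
  unfolding Fs_def TN_def by auto

lemma in_Fs_ext: "t \<in> Fs (t @ u)"
  by (simp add: mem_Fs)

lemma finite_TN: "finite (TN N)"
proof -
  have "TN N = (\<Union>j\<le>N. {xs. set xs \<subseteq> UNIV \<and> length xs = j})" unfolding TN_def by auto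
  then show ?thesis using finite_lists_length_eq[of "UNIV::bool set"] by simp
qed

lemma card_len: "card {xs :: bool list. length xs = n} = 2 ^ n"
  using card_lists_length_eq[of "UNIV::bool set" n] by simp

lemma xN_card: "xN N t = real (card {s. length s = N \<and> take (length t) s = t})"
proof -
  have fin: "finite {s::bool list. length s = N}"
    using finite_lists_length_eq[of "UNIV::bool set" N] by simp
  have "xN N t = (\<Sum>s\<in>{s. length s = N}. if take (length t) s = t then 1 else 0)"
    unfolding xN_def indicator_def by (simp add: mem_Fs of_bool_def)
  also have "\<dots> = real (card ({s. length s = N} \<inter> {s. take (length t) s = t}))"
    using fin by (simp add: sum.If_cases)
  also have "\<dots> = real (card {s. length s = N \<and> take (length t) s = t})"
    by (simp add: Int_def)
  finally show ?thesis .
qed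

lemma xN_val: assumes "length t \<le> N" shows "xN N t = 2 ^ (N - length t)"
proof -
  have "{s. length s = N \<and> take (length t) s = t} = (\<lambda>u. t @ u) ` {u. length u = N - length t}"
  proof (rule set_eqI, rule iffI)
    fix s assume "s \<in> {s. length s = N \<and> take (length t) s = t}"
    then have "s = t @ drop (length t) s" "length (drop (length t) s) = N - length t"
      by (auto, metis append_take_drop_id)
    then show "s \<in> (\<lambda>u. t @ u) ` {u. length u = N - length t}" by blast
  qed (use assms in auto)
  moreover have "card ((\<lambda>u. t @ u) ` {u::bool list. length u = N - length t}) = 2 ^ (N - length t)"
    by (subst card_image) (auto simp: inj_on_def card_len)
  ultimately show ?thesis by (simp add: xN_card)
qed

lemma xN_zero: assumes "length t > N" shows "xN N t = 0"
proof -
  have "{s::bool list. length s = N \<and> take (length t) s = t} = {}" using assms by auto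
  then show ?thesis unfolding xN_card by (metis card.empty of_nat_0)
qed

definition wt :: "nat \<Rightarrow> nat \<Rightarrow> real" where
  "wt N j = (if j < N then 2 ^ (N - Suc j) else 1)"

lemma wt_nonneg: "0 \<le> wt N j" by (simp add: wt_def)

lemma sum_wt: assumes "k \<le> N" shows "(\<Sum>j\<in>{k..N}. wt N j) = 2 ^ (N - k)"
  using assms
proof (induction k rule: inc_induct)
  case base then show ?case by (simp add: wt_def)
next
  case (step n)
  have "{n..N} = insert n {Suc n..N}" using step.hyps by auto
  then have "(\<Sum>j\<in>{n..N}. wt N j) = wt N n + 2 ^ (N - Suc n)" using step by simp
  also have "\<dots> = 2 ^ (N - n)" using step.hyps
    by (simp add: wt_def) (metis Suc_diff_Suc mult_2 power_Suc)
  finally show ?case .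
qed

lemma sum_TN_w: "(\<Sum>t\<in>TN N. wt N (length t)) = 2 ^ N * (1 + real N / 2)"
proof -
  have "(\<Sum>t\<in>TN N. wt N (length t)) = (\<Sum>j\<in>{..N}. \<Sum>t\<in>{t\<in>TN N. length t = j}. wt N (length t))"
    by (rule sum.group[symmetric]) (use finite_TN in \<open>auto simp: TN_def\<close>)
  also have "\<dots> = (\<Sum>j\<in>{..N}. 2 ^ j * wt N j)"
  proof (rule sum.cong)
    fix j assume "j \<in> {..N}"
    then have "{t\<in>TN N. length t = j} = {t. length t = j}" by (auto simp: TN_def)
    then show "(\<Sum>t\<in>{t\<in>TN N. length t = j}. wt N (length t)) = 2 ^ j * wt N j"
      by (simp add: card_len)
  qed simp
  also have "\<dots> = (\<Sum>j\<in>{..<N}. 2 ^ j * wt N j) + 2 ^ N * wt N N"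
    by (simp add: lessThan_Suc_atMost[symmetric])
  also have "(\<Sum>j\<in>{..<N}. 2 ^ j * wt N j) = (\<Sum>j\<in>{..<N}. (2::real) ^ (N - 1))"
  proof (rule sum.cong)
    fix j assume "j \<in> {..<N}"
    then have "j + (N - Suc j) = N - 1" by auto
    then show "2 ^ j * wt N j = (2::real) ^ (N - 1)" using \<open>j \<in> {..<N}\<close>
      by (simp add: wt_def power_add[symmetric])
  qed simp
  also have "(\<Sum>j\<in>{..<N}. (2::real) ^ (N - 1)) + 2 ^ N * wt N N = 2 ^ N * (1 + real N / 2)"
  proof (cases N)
    case 0 then show ?thesis by (simp add: wt_def)
  next
    case (Suc M) then show ?thesis by (simp add: wt_def field_simps)
  qed
  finally show ?thesis .
qed

lemma chain_bound:
  assumes "B \<subseteq> Fs s" "length s = N" "B \<noteq> {}"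
  shows "(\<Sum>t\<in>B. wt N (length t)) \<le> supabs (xN N) B"
proof -
  have finB: "finite B" using assms finite_Fs finite_subset by blast
  define k where "k = Min (length ` B)"
  have "k \<in> length ` B" unfolding k_def using finB assms by simp
  then obtain t0 where t0: "t0 \<in> B" "length t0 = k" by auto
  have kle: "\<And>t. t \<in> B \<Longrightarrow> k \<le> length t" unfolding k_def using finB by simp
  have lenN: "\<And>t. t \<in> B \<Longrightarrow> length t \<le> N" using assms Fs_sub_TN unfolding TN_def by blast
  have inj: "inj_on length B"
  proof
    fix a b assume "a \<in> B" "b \<in> B" "length a = length b"
    then show "a = b" using assms(1) by (metis mem_Fs subsetD)
  qed
  have "(\<Sum>t\<in>B. wt N (length t)) = (\<Sum>j\<in>length ` B. wt N j)"
    by (simp add: sum.reindex[OF inj])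
  also have "\<dots> \<le> (\<Sum>j\<in>{k..N}. wt N j)"
    by (rule sum_mono2) (use kle lenN wt_nonneg in auto)
  also have "\<dots> = 2 ^ (N - k)" using sum_wt[of k N] lenN[OF t0(1)] t0(2) by simp
  also have "\<dots> = \<bar>xN N t0\<bar>" using xN_val[OF lenN[OF t0(1)]] t0(2) by simp
  also have "\<dots> \<le> supabs (xN N) B" unfolding supabs_def using assms t0 finB by simp
  finally show ?thesis .
qed

lemma lower_core:
  fixes W :: "'a \<Rightarrow> real"
  assumes "finite P" "pairwise disjnt P" "\<forall>A\<in>P. finite A" "\<forall>A\<in>P. (\<Sum>v\<in>A. W v) \<le> g A"
  shows "(\<Sum>v\<in>\<Union>P. W v) \<le> (\<Sum>A\<in>P. g A)"
proof -
  have "(\<Sum>v\<in>\<Union>P. W v) = (\<Sum>A\<in>P. \<Sum>v\<in>A. W v)"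
    using sum.Union_disjoint[of P W] assms by (auto simp: pairwise_def disjnt_def)
  also have "\<dots> \<le> (\<Sum>A\<in>P. g A)" by (rule sum_mono) (use assms in auto)
  finally show ?thesis .
qed

lemma supabs_nonneg: "finite A \<Longrightarrow> 0 \<le> supabs x A"
  unfolding supabs_def by (auto intro: order.trans[OF abs_ge_zero Max_ge])

lemma TN_lower:
  assumes "P \<in> partitions (TN N)" "P \<subseteq> FamN N"
  shows "ennreal (2 ^ N * (1 + real N / 2)) \<le> (\<Sum>\<^sub>\<infinity>F\<in>P. ennreal (supabs (xN N) F))"
proof -
  have PU: "\<Union>P = TN N" "pairwise disjnt P" using assms(1) unfolding partitions_def by auto
  have "P \<subseteq> Pow (TN N)" using PU by auto
  then have finP: "finite P" using finite_TN by (meson finite_Pow_iff finite_subset)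
  have finA: "\<forall>A\<in>P. finite A" using PU(1) finite_TN[of N] by (metis Union_upper finite_subset)
  have "2 ^ N * (1 + real N / 2) = (\<Sum>v\<in>\<Union>P. wt N (length v))" using PU sum_TN_w by simp
  also have "\<dots> \<le> (\<Sum>A\<in>P. supabs (xN N) A)"
  proof (rule lower_core[OF finP PU(2) finA], rule ballI)
    fix A assume "A \<in> P"
    then obtain s where "length s = N" "A \<subseteq> Fs s" using assms(2) FamN_char by blast
    then show "(\<Sum>v\<in>A. wt N (length v)) \<le> supabs (xN N) A"
      using chain_bound[of A s N] by (cases "A = {}") (auto simp: supabs_def)
  qed
  finally have "ennreal (2 ^ N * (1 + real N / 2)) \<le> ennreal (\<Sum>A\<in>P. supabs (xN N) A)"
    by (rule ennreal_leI)
  also have "\<dots> = (\<Sum>A\<in>P. ennreal (supabs (xN N) A))"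
    by (rule sum_ennreal[symmetric]) (simp add: supabs_nonneg finA)
  also have "\<dots> = (\<Sum>\<^sub>\<infinity>F\<in>P. ennreal (supabs (xN N) F))" using finP by simp
  finally show ?thesis .
qed

definition topp :: "bool list \<Rightarrow> bool list" where
  "topp v = rev (dropWhile Not (rev v))"

lemma top_decomp: "v = topp v @ replicate (length v - length (topp v)) False"
proof -
  define d where "d = dropWhile Not (rev v)"
  define tw where "tw = takeWhile Not (rev v)"
  have rv: "rev v = tw @ d" unfolding d_def tw_def by simp
  have "\<forall>y\<in>set tw. y = False" unfolding tw_def by (auto dest: set_takeWhileD)
  then have tw: "replicate (length tw) False = tw" by (rule replicate_length_same)
  have "v = rev d @ rev tw" using rv by (metis rev_append rev_rev_ident)
  also have "rev tw = replicate (length tw) False" using tw by (metis rev_replicate)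
  finally have v: "v = topp v @ replicate (length tw) False" unfolding topp_def d_def .
  then have "length tw = length v - length (topp v)"
    by (metis add_diff_cancel_left' length_append length_replicate)
  with v show ?thesis by simp
qed

lemma top_len: "length (topp v) \<le> length v"
  unfolding topp_def by (metis length_dropWhile_le length_rev)

lemma top_last: "topp v = [] \<or> last (topp v)"
proof (cases "dropWhile Not (rev v) = []")
  case True
  have "topp v = []" unfolding topp_def by (simp only: True rev.simps(1))
  then show ?thesis by blast
next
  case False
  then have "hd (dropWhile Not (rev v))" using hd_dropWhile[of Not "rev v"] by blast
  then show ?thesis using False unfolding topp_def by (simp add: last_rev)
qed

definition tops :: "nat \<Rightarrow> bool list set" where
  "tops N = {t \<in> TN N. t = [] \<or> last t}"

lemma tops_eq: "tops N = insert [] ((\<lambda>u. u @ [True]) ` {u. length u < N})"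
proof (rule set_eqI, rule iffI)
  fix t assume t: "t \<in> tops N"
  show "t \<in> insert [] ((\<lambda>u. u @ [True]) ` {u. length u < N})"
  proof (cases t rule: rev_cases)
    case Nil then show ?thesis by simp
  next
    case (snoc u b)
    then have "b" "length u < N" using t unfolding tops_def TN_def by auto
    then show ?thesis using snoc by blast
  qed
next
  fix t assume "t \<in> insert [] ((\<lambda>u. u @ [True]) ` {u. length u < N})"
  then show "t \<in> tops N" unfolding tops_def TN_def by auto
qed

lemma sum_tops: "(\<Sum>t\<in>tops N. (2::real) ^ (N - length t)) = 2 ^ N * (1 + real N / 2)"
proof -
  have fin: "finite {u::bool list. length u < N}"
    by (rule finite_subset[OF _ finite_TN[of N]]) (auto simp: TN_def)
  have fin2: "finite {u::bool list. length u = N}"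
    by (rule finite_subset[OF _ finite_TN[of N]]) (auto simp: TN_def)
  have "(\<Sum>t\<in>tops N. (2::real) ^ (N - length t)) = 2 ^ N + (\<Sum>t\<in>(\<lambda>u. u @ [True]) ` {u. length u < N}. 2 ^ (N - length t))"
    unfolding tops_eq using fin by (subst sum.insert) auto
  also have "(\<Sum>t\<in>(\<lambda>u. u @ [True]) ` {u. length u < N}. (2::real) ^ (N - length t)) = (\<Sum>u\<in>{u::bool list. length u < N}. wt N (length u))"
    by (subst sum.reindex) (auto simp: inj_on_def wt_def intro!: sum.cong)
  also have "(\<Sum>u\<in>{u::bool list. length u < N}. wt N (length u)) = (\<Sum>t\<in>TN N. wt N (length t)) - (\<Sum>u\<in>{u::bool list. length u = N}. wt N (length u))"
  proof -
    have "TN N = {u. length u < N} \<union> {u. length u = N}" unfolding TN_def by auto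
    then have "(\<Sum>t\<in>TN N. wt N (length t)) = (\<Sum>u\<in>{u::bool list. length u < N}. wt N (length u)) + (\<Sum>u\<in>{u::bool list. length u = N}. wt N (length u))"
      using fin fin2 by (simp add: sum.union_disjoint disjoint_iff)
    then show ?thesis by simp
  qed
  also have "(\<Sum>u\<in>{u::bool list. length u = N}. wt N (length u)) = 2 ^ N"
    by (simp add: wt_def card_len)
  finally show ?thesis using sum_TN_w by simp
qed

definition P0 :: "nat \<Rightarrow> bool list set set" where
  "P0 N = insert {} ((\<lambda>t. {v \<in> TN N. topp v = t}) ` tops N)"

lemma P0_part: "P0 N \<in> partitions (TN N)"
proof -
  have "\<Union>(P0 N) = TN N"
  proof
    show "\<Union>(P0 N) \<subseteq> TN N" unfolding P0_def by auto
    show "TN N \<subseteq> \<Union>(P0 N)"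
    proof
      fix v assume v: "v \<in> TN N"
      then have "topp v \<in> tops N" unfolding tops_def TN_def using top_len top_last
        by (metis (mono_tags, lifting) le_trans mem_Collect_eq)
      then show "v \<in> \<Union>(P0 N)" unfolding P0_def using v by blast
    qed
  qed
  moreover have "pairwise disjnt (P0 N)"
    unfolding P0_def pairwise_def disjnt_def by auto
  ultimately show ?thesis unfolding partitions_def P0_def by auto
qed

lemma P0_fam: "P0 N \<subseteq> FamN N"
proof
  fix A assume "A \<in> P0 N"
  then consider "A = {}" | t where "t \<in> tops N" "A = {v \<in> TN N. topp v = t}"
    unfolding P0_def by auto
  then show "A \<in> FamN N"
  proof cases
    case 1 then show ?thesis unfolding FamN_char by (auto intro: exI[of _ "replicate N False"])
  next
    case 2
    let ?s = "t @ replicate (N - length t) False"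
    have "length ?s = N" using 2 unfolding tops_def TN_def by auto
    moreover have "A \<subseteq> Fs ?s"
    proof
      fix v assume "v \<in> A"
      then have v: "length v \<le> N" "topp v = t" using 2 unfolding TN_def by auto
      then have "v = t @ replicate (length v - length t) False" using top_decomp by metis
      moreover have "take (length v) ?s = t @ replicate (length v - length t) False"
        using v top_len[of v] by (simp add: min_def)
      ultimately show "v \<in> Fs ?s" unfolding mem_Fs by simp
    qed
    ultimately show ?thesis unfolding FamN_char by blast
  qed
qed

lemma TN_upper: "upper_norm (TN N) (FamN N) (xN N) \<le> ennreal (2 ^ N * (1 + real N / 2))"
proof -
  let ?f = "\<lambda>t. {v \<in> TN N. topp v = t}"
  have fintops: "finite (tops N)" unfolding tops_def using finite_TN by simp
  have finP: "finite (P0 N)" unfolding P0_def using fintops by simp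
  have finM: "\<And>A. A \<in> P0 N \<Longrightarrow> finite A" unfolding P0_def using finite_TN by auto
  have finf: "\<And>t. finite (?f t)" using finite_TN by simp
  have bound: "supabs (xN N) (?f t) \<le> 2 ^ (N - length t)" if "t \<in> tops N" for t
  proof (cases "?f t = {}")
    case True then show ?thesis by (simp add: supabs_def)
  next
    case False
    have "finite (?f t)" using finite_TN by simp
    moreover have "\<forall>v\<in>?f t. \<bar>xN N v\<bar> \<le> 2 ^ (N - length t)"
    proof
      fix v assume "v \<in> ?f t"
      then have "length v \<le> N" "length t \<le> length v" using top_len unfolding TN_def by auto
      then show "\<bar>xN N v\<bar> \<le> 2 ^ (N - length t)" using xN_val by simp
    qed
    ultimately show ?thesis unfolding supabs_def using False by simp
  qed
  have "upper_norm (TN N) (FamN N) (xN N) \<le> (\<Sum>\<^sub>\<infinity>F\<in>P0 N. ennreal (supabs (xN N) F))"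
    unfolding upper_norm_def by (rule INF_lower) (simp add: P0_part P0_fam)
  also have "\<dots> = ennreal (\<Sum>F\<in>P0 N. supabs (xN N) F)"
    using finP by (simp add: sum_ennreal supabs_nonneg finM)
  also have "(\<Sum>F\<in>P0 N. supabs (xN N) F) = (\<Sum>F\<in>?f ` tops N. supabs (xN N) F)"
    unfolding P0_def using fintops by (simp add: sum.insert_if supabs_def)
  also have "\<dots> \<le> (\<Sum>t\<in>tops N. supabs (xN N) (?f t))"
    using sum_image_le[OF fintops, of "supabs (xN N)" ?f] supabs_nonneg[OF finf] by (simp add: o_def)
  also have "\<dots> \<le> (\<Sum>t\<in>tops N. 2 ^ (N - length t))" by (rule sum_mono) (rule bound)
  also have "\<dots> = 2 ^ N * (1 + real N / 2)" by (rule sum_tops)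
  finally show ?thesis by (simp add: ennreal_leI)
qed

lemma TN_norm: "upper_norm (TN N) (FamN N) (xN N) = ennreal (2 ^ N * (1 + real N / 2))"
proof (rule antisym[OF TN_upper])
  show "ennreal (2 ^ N * (1 + real N / 2)) \<le> upper_norm (TN N) (FamN N) (xN N)"
    unfolding upper_norm_def by (rule INF_greatest) (use TN_lower in auto)
qed

lemma ind_norm:
  fixes A :: "'i set"
  assumes "A \<in> Fam" "A \<subseteq> I" "A \<noteq> {}" "\<forall>i\<in>I. {i} \<in> Fam" "{} \<in> Fam" "\<forall>B\<in>Fam. finite B"
  shows "upper_norm I Fam (indicator A) = 1"
proof (rule antisym)
  let ?f = "\<lambda>B. ennreal (supabs (indicator A :: 'i \<Rightarrow> real) B)"
  define P where "P = insert {} (insert A ((\<lambda>i. {i}) ` (I - A)))"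
  have finA: "finite A" using assms by blast
  have fA: "?f A = 1"
  proof -
    have "(\<lambda>k. \<bar>indicator A k :: real\<bar>) ` A = {1}" using assms(3) by auto
    then show ?thesis unfolding supabs_def using assms(3) by simp
  qed
  have f0: "?f B = 0" if "B \<in> P - {A}" for B
  proof -
    from that consider "B = {}" | i where "i \<in> I - A" "B = {i}" unfolding P_def by auto
    then show ?thesis
    proof cases
      case 1 then show ?thesis by (simp add: supabs_def)
    next
      case 2 then show ?thesis by (simp add: supabs_def)
    qed
  qed
  have Ppart: "P \<in> partitions I"
  proof -
    have "\<Union>P = I" unfolding P_def using assms(2) by auto
    moreover have "pairwise disjnt P" unfolding P_def pairwise_def disjnt_def by auto
    ultimately show ?thesis unfolding partitions_def P_def by auto
  qed
  have Pfam: "P \<subseteq> Fam" unfolding P_def using assms by auto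
  have "upper_norm I Fam (indicator A) \<le> (\<Sum>\<^sub>\<infinity>B\<in>P. ?f B)"
    unfolding upper_norm_def by (rule INF_lower) (use Ppart Pfam in auto)
  also have "(\<Sum>\<^sub>\<infinity>B\<in>P. ?f B) = (\<Sum>\<^sub>\<infinity>B\<in>{A}. ?f B)"
    by (rule infsum_cong_neutral) (use f0 in \<open>auto simp: P_def\<close>)
  also have "\<dots> = 1" using fA by simp
  finally show "upper_norm I Fam (indicator A) \<le> 1" .
next
  show "1 \<le> upper_norm I Fam (indicator A)"
    unfolding upper_norm_def
  proof (rule INF_greatest)
    fix P assume P: "P \<in> {P \<in> partitions I. P \<subseteq> Fam}"
    obtain a where a: "a \<in> A" using assms(3) by auto
    then have "a \<in> \<Union>P" using P assms(2) unfolding partitions_def by auto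
    then obtain B where B: "B \<in> P" "a \<in> B" by auto
    then have finB: "finite B" using P assms(6) by auto
    have "(1::real) = \<bar>indicator A a\<bar>" using a by simp
    also have "\<dots> \<le> supabs (indicator A) B" unfolding supabs_def using B finB by auto
    finally have "1 \<le> ennreal (supabs (indicator A) B)" by (simp add: ennreal_leI)
    also have "\<dots> = (\<Sum>F\<in>{B}. ennreal (supabs (indicator A) F))" by simp
    also have "\<dots> \<le> (\<Sum>\<^sub>\<infinity>F\<in>P. ennreal (supabs (indicator A) F))"
      by (rule infsum_ge_sum) (use B in auto)
    finally show "1 \<le> (\<Sum>\<^sub>\<infinity>F\<in>P. ennreal (supabs (indicator A) F))" .
  qed
qed

lemma pad: "length t \<le> N \<Longrightarrow> t \<in> Fs (t @ replicate (N - length t) False) \<and> length (t @ replicate (N - length t) False) = N"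
  by (simp add: in_Fs_ext)

lemma FamN_props:
  shows "{} \<in> FamN N" "\<forall>t\<in>TN N. {t} \<in> FamN N" "\<forall>B\<in>FamN N. finite B"
    "length s = N \<Longrightarrow> Fs s \<in> FamN N"
proof -
  show "{} \<in> FamN N" unfolding FamN_char by (auto intro: exI[of _ "replicate N False"])
  show "\<forall>t\<in>TN N. {t} \<in> FamN N" unfolding FamN_char TN_def using pad by blast
  show "\<forall>B\<in>FamN N. finite B" unfolding FamN_char using finite_Fs finite_subset by blast
  show "length s = N \<Longrightarrow> Fs s \<in> FamN N" unfolding FamN_char by blast
qed

lemma Famall_props:
  shows "{} \<in> Famall" "\<forall>i\<in>Tall. {i} \<in> Famall" "\<forall>B\<in>Famall. finite B"
    "length s = N \<Longrightarrow> {N} \<times> Fs s \<in> Famall" "hereditary Famall" "covers Tall Famall"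
proof -
  show "{} \<in> Famall" unfolding Famall_char by blast
  show si: "\<forall>i\<in>Tall. {i} \<in> Famall"
  proof
    fix i assume "i \<in> Tall"
    then obtain N t where "i = (N, t)" "length t \<le> N" unfolding Tall_def TN_def by auto
    then show "{i} \<in> Famall" unfolding Famall_char using pad[of t N] by blast
  qed
  show "\<forall>B\<in>Famall. finite B"
  proof
    fix B assume "B \<in> Famall"
    then obtain N s where "B \<subseteq> {N} \<times> Fs s" unfolding Famall_char by blast
    moreover have "finite ({N} \<times> Fs s)" using finite_Fs by simp
    ultimately show "finite B" by (rule finite_subset)
  qed
  show "length s = N \<Longrightarrow> {N} \<times> Fs s \<in> Famall" unfolding Famall_char by blast
  show "hereditary Famall" unfolding hereditary_def Famall_char by blast
  have sub: "\<forall>A\<in>Famall. A \<subseteq> Tall" unfolding Famall_char Tall_def using Fs_sub_TN by blast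
  moreover have "\<Union>Famall = Tall"
  proof
    show "\<Union>Famall \<subseteq> Tall" using sub by blast
    show "Tall \<subseteq> \<Union>Famall" using si by blast
  qed
  ultimately show "covers Tall Famall" unfolding covers_def by blast
qed

lemma bad_finite:
  assumes "A \<subseteq> Tall" "A \<notin> Famall"
  shows "\<exists>B. finite B \<and> B \<subseteq> A \<and> B \<notin> Famall"
proof (cases "\<exists>p\<in>A. \<exists>q\<in>A. fst p \<noteq> fst q")
  case True
  then obtain p q where pq: "p \<in> A" "q \<in> A" "fst p \<noteq> fst q" by blast
  have "{p, q} \<notin> Famall"
  proof
    assume "{p, q} \<in> Famall"
    then obtain N s where "{p, q} \<subseteq> {N} \<times> Fs s" unfolding Famall_char by blast
    then have "fst p = N" "fst q = N" by auto
    then show False using pq(3) by simp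
  qed
  then show ?thesis using pq by (intro exI[of _ "{p,q}"]) simp
next
  case False
  show ?thesis
  proof (cases "A = {}")
    case True then show ?thesis using assms Famall_props(1) by blast
  next
    case ne: False
    then obtain p where "p \<in> A" by blast
    have "A \<subseteq> {fst p} \<times> TN (fst p)"
    proof
      fix q assume q: "q \<in> A"
      then have "fst q = fst p" using False \<open>p \<in> A\<close> by blast
      moreover have "snd q \<in> TN (fst q)" using q assms(1) unfolding Tall_def by auto
      ultimately show "q \<in> {fst p} \<times> TN (fst p)" by (cases q) auto
    qed
    moreover have "finite ({fst p} \<times> TN (fst p))" using finite_TN by simp
    ultimately have "finite A" by (rule finite_subset)
    then show ?thesis using assms(2) by (intro exI[of _ A]) simp
  qed
qed

lemma compact_all: "compact_family Tall Famall"
proof -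
  let ?X = "product_topology (\<lambda>_. discrete_topology (UNIV::bool set)) Tall"
  let ?g = "\<lambda>A. \<lambda>i\<in>Tall. i \<in> A"
  have cs: "compact_space ?X"
    by (simp add: compact_space_product_topology compact_space_discrete_topology)
  have top: "topspace ?X = PiE Tall (\<lambda>_. UNIV)" by simp
  have "openin ?X (topspace ?X - ?g ` Famall)"
  proof (subst openin_subopen, rule ballI)
    fix f assume f: "f \<in> topspace ?X - ?g ` Famall"
    define A where "A = {i \<in> Tall. f i}"
    have fe: "f \<in> extensional Tall" using f unfolding top PiE_def by blast
    have fA: "f = ?g A"
    proof (rule ext)
      fix i show "f i = ?g A i"
      proof (cases "i \<in> Tall")
        case True then show ?thesis by (simp add: A_def)
      next
        case False then show ?thesis using extensional_arb[OF fe False] by simp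
      qed
    qed
    then have "A \<notin> Famall" using f by blast
    moreover have "A \<subseteq> Tall" unfolding A_def by blast
    ultimately obtain B where B: "finite B" "B \<subseteq> A" "B \<notin> Famall" using bad_finite by blast
    define T where "T = PiE Tall (\<lambda>i. if i \<in> B then {True} else UNIV)"
    have "{i \<in> Tall. (if i \<in> B then {True} else UNIV) \<noteq> topspace (discrete_topology (UNIV::bool set))} \<subseteq> B"
      by auto
    then have "finite {i \<in> Tall. (if i \<in> B then {True} else UNIV) \<noteq> topspace (discrete_topology (UNIV::bool set))}"
      using B(1) by (rule finite_subset)
    then have "openin ?X T" unfolding T_def openin_PiE_gen by simp
    moreover have "f \<in> T" unfolding T_def PiE_iff
    proof (intro conjI ballI)
      fix i assume "i \<in> Tall"
      show "f i \<in> (if i \<in> B then {True} else UNIV)"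
        using B(2) unfolding A_def by auto
    qed (rule fe)
    moreover have "T \<subseteq> topspace ?X - ?g ` Famall"
    proof
      fix h assume h: "h \<in> T"
      have "h \<notin> ?g ` Famall"
      proof
        assume "h \<in> ?g ` Famall"
        then obtain C where C: "C \<in> Famall" "h = ?g C" by blast
        have "B \<subseteq> C"
        proof
          fix i assume "i \<in> B"
          then have i: "i \<in> Tall" using B(2) unfolding A_def by blast
          then have "h i \<in> (if i \<in> B then {True} else UNIV)" using h unfolding T_def PiE_iff by blast
          then have "h i" using \<open>i \<in> B\<close> by simp
          then show "i \<in> C" using C i by simp
        qed
        then have "B \<in> Famall" using C Famall_props(5) unfolding hereditary_def by blast
        then show False using B by blast
      qed
      moreover have "h \<in> topspace ?X" using h unfolding T_def top PiE_iff by blast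
      ultimately show "h \<in> topspace ?X - ?g ` Famall" by blast
    qed
    ultimately show "\<exists>T. openin ?X T \<and> f \<in> T \<and> T \<subseteq> topspace ?X - ?g ` Famall" by blast
  qed
  moreover have "?g ` Famall \<subseteq> topspace ?X" by auto
  ultimately have "closedin ?X (?g ` Famall)" unfolding closedin_def by blast
  then show ?thesis unfolding compact_family_def using closedin_compact_space[OF cs] by blast
qed

lemma Tall_lower:
  assumes "P \<in> partitions Tall" "P \<subseteq> Famall"
  shows "ennreal (2 ^ N * (1 + real N / 2))
     \<le> (\<Sum>\<^sub>\<infinity>F\<in>P. ennreal (supabs (\<lambda>k. if fst k = N then xN N (snd k) else 0) F))"
proof -
  let ?y = "\<lambda>k. if fst k = N then xN N (snd k) else 0"
  let ?C = "{N} \<times> TN N"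
  define P' where "P' = {A \<in> P. A \<inter> ?C \<noteq> {}}"
  have PU: "\<Union>P = Tall" "pairwise disjnt P" using assms(1) unfolding partitions_def by auto
  have inC: "\<exists>s. length s = N \<and> A \<subseteq> {N} \<times> Fs s" if "A \<in> P'" for A
  proof -
    from that have "A \<in> Famall" "A \<inter> ?C \<noteq> {}" unfolding P'_def using assms(2) by auto
    then obtain M s where Ms: "length s = M" "A \<subseteq> {M} \<times> Fs s" unfolding Famall_char by blast
    obtain v where "v \<in> A" "v \<in> ?C" using \<open>A \<inter> ?C \<noteq> {}\<close> by blast
    then have "M = N" using Ms by auto
    then show ?thesis using Ms by blast
  qed
  have subC: "A \<subseteq> ?C" if "A \<in> P'" for A
    using inC[OF that] Fs_sub_TN by blast
  have finP': "finite P'"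
  proof -
    have "P' \<subseteq> Pow ?C" using subC by blast
    moreover have "finite ?C" using finite_TN by simp
    ultimately show ?thesis by (meson finite_Pow_iff finite_subset)
  qed
  have finA: "\<forall>A\<in>P'. finite A" using subC finite_TN
    by (metis finite_SigmaI finite.emptyI finite_insert finite_subset)
  have disj': "pairwise disjnt P'" using PU(2) unfolding P'_def pairwise_def by auto
  have UP': "\<Union>P' = ?C"
  proof
    show "\<Union>P' \<subseteq> ?C" using subC by blast
    show "?C \<subseteq> \<Union>P'"
    proof
      fix v assume v: "v \<in> ?C"
      then have "v \<in> \<Union>P" using PU unfolding Tall_def by auto
      then obtain A where "A \<in> P" "v \<in> A" by blast
      then have "A \<in> P'" using v unfolding P'_def by blast
      then show "v \<in> \<Union>P'" using \<open>v \<in> A\<close> by blast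
    qed
  qed
  let ?W = "\<lambda>v. wt N (length (snd v))"
  have "(\<Sum>v\<in>?C. ?W v) = (\<Sum>t\<in>TN N. wt N (length t))"
  proof -
    have "?C = Pair N ` TN N" by auto
    then show ?thesis by (simp add: sum.reindex inj_on_def)
  qed
  then have "2 ^ N * (1 + real N / 2) = (\<Sum>v\<in>\<Union>P'. ?W v)" using UP' sum_TN_w by simp
  also have "\<dots> \<le> (\<Sum>A\<in>P'. supabs ?y A)"
  proof (rule lower_core[OF finP' disj' finA], rule ballI)
    fix A assume A: "A \<in> P'"
    then obtain s where s: "length s = N" "A \<subseteq> {N} \<times> Fs s" using inC by blast
    have ne: "A \<noteq> {}" using A unfolding P'_def by blast
    have inj: "inj_on snd A" using s(2) by (auto simp: inj_on_def)
    have "(\<Sum>v\<in>A. ?W v) = (\<Sum>t\<in>snd ` A. wt N (length t))" by (simp add: sum.reindex[OF inj])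
    also have "\<dots> \<le> supabs (xN N) (snd ` A)"
      by (rule chain_bound[OF _ s(1)]) (use s(2) ne in auto)
    also have "supabs (xN N) (snd ` A) = supabs ?y A"
    proof -
      have "(\<lambda>k. \<bar>?y k\<bar>) ` A = (\<lambda>t. \<bar>xN N t\<bar>) ` (snd ` A)"
        unfolding image_image using s(2) by (intro image_cong) auto
      then show ?thesis unfolding supabs_def using ne by simp
    qed
    finally show "(\<Sum>v\<in>A. ?W v) \<le> supabs ?y A" .
  qed
  finally have "ennreal (2 ^ N * (1 + real N / 2)) \<le> ennreal (\<Sum>A\<in>P'. supabs ?y A)"
    by (rule ennreal_leI)
  also have "\<dots> = (\<Sum>A\<in>P'. ennreal (supabs ?y A))"
    by (rule sum_ennreal[symmetric]) (simp add: supabs_nonneg finA)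
  also have "\<dots> \<le> (\<Sum>\<^sub>\<infinity>F\<in>P. ennreal (supabs ?y F))"
    by (rule infsum_ge_sum[OF finP']) (auto simp: P'_def)
  finally show ?thesis .
qed

lemma Tall_norm_lower:
  "ennreal (2 ^ N * (1 + real N / 2)) \<le> upper_norm Tall Famall (\<lambda>k. if fst k = N then xN N (snd k) else 0)"
  unfolding upper_norm_def by (rule INF_greatest) (use Tall_lower in auto)

lemma sub_Tall: "length s = N \<Longrightarrow> {N} \<times> Fs s \<subseteq> Tall"
proof
  fix v assume "length s = N" "v \<in> {N} \<times> Fs s"
  then have "fst v = N" "snd v \<in> TN N" using Fs_sub_TN[of s N] by auto
  then show "v \<in> Tall" unfolding Tall_def by (cases v) auto
qed

lemma no_const:
  "\<not> (\<exists>C::real. C > 0 \<and>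
       (\<forall>(n::nat) (xs::nat \<Rightarrow> nat \<times> bool list \<Rightarrow> real).
          (\<forall>i\<le>n. xs i \<in> c00 Tall) \<longrightarrow>
          upper_norm Tall Famall (\<lambda>k. \<Sum>i\<le>n. xs i k)
            \<le> ennreal C * (\<Sum>i\<le>n. upper_norm Tall Famall (xs i))))"
proof
  assume "\<exists>C::real. C > 0 \<and>
       (\<forall>(n::nat) (xs::nat \<Rightarrow> nat \<times> bool list \<Rightarrow> real).
          (\<forall>i\<le>n. xs i \<in> c00 Tall) \<longrightarrow>
          upper_norm Tall Famall (\<lambda>k. \<Sum>i\<le>n. xs i k)
            \<le> ennreal C * (\<Sum>i\<le>n. upper_norm Tall Famall (xs i)))"
  then obtain C :: real where C: "C > 0" and H0: "\<forall>(n::nat) (xs::nat \<Rightarrow> nat \<times> bool list \<Rightarrow> real).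
          (\<forall>i\<le>n. xs i \<in> c00 Tall) \<longrightarrow>
          upper_norm Tall Famall (\<lambda>k. \<Sum>i\<le>n. xs i k)
            \<le> ennreal C * (\<Sum>i\<le>n. upper_norm Tall Famall (xs i))" by (elim exE conjE)
  have H: "upper_norm Tall Famall (\<lambda>k. \<Sum>i\<le>n. xs i k)
            \<le> ennreal C * (\<Sum>i\<le>n. upper_norm Tall Famall (xs i))"
    if "\<forall>i\<le>n. xs i \<in> c00 Tall" for n :: nat and xs :: "nat \<Rightarrow> nat \<times> bool list \<Rightarrow> real"
    using mp[OF spec[OF spec[OF H0, of n], of xs] that] .
  define N where "N = nat \<lceil>2 * C\<rceil>"
  have NC: "real N / 2 \<ge> C" unfolding N_def using real_nat_ceiling_ge[of "2 * C"] by linarith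
  define S where "S = {s::bool list. length s = N}"
  have finS: "finite S" unfolding S_def using finite_lists_length_eq[of "UNIV::bool set" N] by simp
  have cardS: "card S = 2 ^ N" unfolding S_def by (rule card_len)
  obtain h0 where "bij_betw h0 {0..<card S} S" using ex_bij_betw_nat_finite[OF finS] by (elim exE)
  then have h: "bij_betw h0 {0..<(2::nat) ^ N} S" unfolding cardS .
  define n where "n = 2 ^ N - (1::nat)"
  have pos: "(0::nat) < 2 ^ N" by simp
  have sn: "Suc n = 2 ^ N" unfolding n_def using pos by simp
  have nset: "{..n} = {0..<(2::nat) ^ N}" by (simp only: atLeast0LessThan sn[symmetric] lessThan_Suc_atMost)
  define xs :: "nat \<Rightarrow> nat \<times> bool list \<Rightarrow> real" where "xs i = indicator ({N} \<times> Fs (h0 i))" for i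
  have hS: "length (h0 i) = N" if "i \<le> n" for i
  proof -
    have "i \<in> {0..<(2::nat)^N}" using that nset by blast
    then have "h0 i \<in> S" using h bij_betwE by blast
    then show ?thesis by (simp add: S_def)
  qed
  have c00: "\<forall>i\<le>n. xs i \<in> c00 Tall"
  proof (intro allI impI)
    fix i assume "i \<le> n"
    have "{k. xs i k \<noteq> 0} = {N} \<times> Fs (h0 i)" unfolding xs_def by (auto simp: indicator_def)
    moreover have "{N} \<times> Fs (h0 i) \<subseteq> Tall" using hS[OF \<open>i \<le> n\<close>] by (rule sub_Tall)
    ultimately show "xs i \<in> c00 Tall" unfolding c00_def using finite_Fs by simp
  qed
  have one: "upper_norm Tall Famall (xs i) = 1" if "i \<le> n" for i
    unfolding xs_def
  proof (rule ind_norm)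
    show "{N} \<times> Fs (h0 i) \<in> Famall" using Famall_props(4) hS[OF that] by blast
    show "{N} \<times> Fs (h0 i) \<subseteq> Tall" using hS[OF that] by (rule sub_Tall)
    have "[] \<in> Fs (h0 i)" by (simp add: mem_Fs)
    then show "{N} \<times> Fs (h0 i) \<noteq> {}" by blast
  qed (use Famall_props(1,2,3) in simp_all)
  have sumeq: "(\<lambda>k. \<Sum>i\<le>n. xs i k) = (\<lambda>k. if fst k = N then xN N (snd k) else 0)"
  proof (rule ext)
    fix k :: "nat \<times> bool list"
    obtain M t where k: "k = (M, t)" by (cases k)
    have "(\<Sum>i\<le>n. xs i k) = (\<Sum>i\<in>{0..<(2::nat)^N}. if M = N then indicator (Fs (h0 i)) t else 0)"
      unfolding nset xs_def k by (intro sum.cong) (auto simp: indicator_def)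
    also have "\<dots> = (if M = N then (\<Sum>i\<in>{0..<(2::nat)^N}. indicator (Fs (h0 i)) t) else 0)" by simp
    also have "(\<Sum>i\<in>{0..<(2::nat)^N}. indicator (Fs (h0 i)) t) = (\<Sum>s\<in>S. indicator (Fs s) t)"
      using sum.reindex_bij_betw[OF h, of "\<lambda>s. indicator (Fs s) t"] by simp
    also have "\<dots> = xN N t" unfolding xN_def S_def by simp
    finally show "(\<Sum>i\<le>n. xs i k) = (if fst k = N then xN N (snd k) else 0)" using k by simp
  qed
  have "(\<Sum>i\<le>n. upper_norm Tall Famall (xs i)) = (\<Sum>i\<le>n. (1::ennreal))" using one by simp
  also have "\<dots> = ennreal (2 ^ N)" using nset by (simp add: ennreal_of_nat_eq_real_of_nat)
  finally have s1: "(\<Sum>i\<le>n. upper_norm Tall Famall (xs i)) = ennreal (2 ^ N)" .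
  have "ennreal (2 ^ N * (1 + real N / 2)) \<le> upper_norm Tall Famall (\<lambda>k. \<Sum>i\<le>n. xs i k)"
    unfolding sumeq by (rule Tall_norm_lower)
  also have "\<dots> \<le> ennreal C * ennreal (2 ^ N)" using H[OF c00] s1 by simp
  also have "\<dots> = ennreal (C * 2 ^ N)" using C by (simp add: ennreal_mult)
  finally have "2 ^ N * (1 + real N / 2) \<le> C * 2 ^ N"
    using C by (subst (asm) ennreal_le_iff) auto
  then have "1 + real N / 2 \<le> C" by simp
  then show False using NC by linarith
qed

lemma c00_sum:
  fixes n :: nat
  assumes "\<forall>i\<le>n. xs i \<in> c00 I"
  shows "(\<lambda>k. \<Sum>i\<le>n. xs i k) \<in> c00 I"
proof -
  have sub: "{k. (\<Sum>i\<le>n. xs i k) \<noteq> 0} \<subseteq> (\<Union>i\<le>n. {k. xs i k \<noteq> 0})"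
  proof
    fix k assume "k \<in> {k. (\<Sum>i\<le>n. xs i k) \<noteq> 0}"
    then obtain i where "i \<le> n" "xs i k \<noteq> 0" by (metis (mono_tags, lifting) atMost_iff mem_Collect_eq sum.neutral)
    then show "k \<in> (\<Union>i\<le>n. {k. xs i k \<noteq> 0})" by blast
  qed
  have fU: "finite (\<Union>i\<le>n. {k. xs i k \<noteq> 0})" using assms unfolding c00_def by (subst finite_UN) auto
  have uI: "(\<Union>i\<le>n. {k. xs i k \<noteq> 0}) \<subseteq> I" using assms unfolding c00_def by auto
  have fin: "finite {k. (\<Sum>i\<le>n. xs i k) \<noteq> 0}" using sub fU by (rule finite_subset)
  show ?thesis unfolding c00_def using fin sub uI by blast
qed

lemma T_sum:
  fixes n :: nat
  assumes lin: "\<forall>x\<in>c00 I. \<forall>y\<in>c00 I. \<forall>a b::real. T (\<lambda>k. a * x k + b * y k) = (\<lambda>k. a * T x k + b * T y k)"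
  shows "(\<forall>i\<le>n. xs i \<in> c00 I) \<Longrightarrow> T (\<lambda>k. \<Sum>i\<le>n. xs i k) = (\<lambda>k. \<Sum>i\<le>n. T (xs i) k)"
proof (induction n)
  case 0 then show ?case by simp
next
  case (Suc n)
  have a: "(\<lambda>k. \<Sum>i\<le>n. xs i k) \<in> c00 I" using Suc.prems by (intro c00_sum) auto
  have b: "xs (Suc n) \<in> c00 I" using Suc.prems by auto
  have "(\<lambda>k. \<Sum>i\<le>Suc n. xs i k) = (\<lambda>k. 1 * (\<Sum>i\<le>n. xs i k) + 1 * xs (Suc n) k)" by simp
  then have "T (\<lambda>k. \<Sum>i\<le>Suc n. xs i k) = (\<lambda>k. 1 * T (\<lambda>k. \<Sum>i\<le>n. xs i k) k + 1 * T (xs (Suc n)) k)"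
    using lin a b by metis
  also have "\<dots> = (\<lambda>k. \<Sum>i\<le>Suc n. T (xs i) k)" using Suc by simp
  finally show ?case .
qed

lemma dual_sub: "dual_norm I Fam (\<lambda>k. y k + z k) \<le> dual_norm I Fam y + dual_norm I Fam z"
  unfolding dual_norm_def
proof (rule SUP_least)
  fix x assume x: "x \<in> {x \<in> c00 I. lower_norm Fam x \<le> 1}"
  let ?Z = "{k. x k \<noteq> 0}"
  have "\<bar>\<Sum>k\<in>?Z. x k * (y k + z k)\<bar> \<le> \<bar>\<Sum>k\<in>?Z. x k * y k\<bar> + \<bar>\<Sum>k\<in>?Z. x k * z k\<bar>"
    by (simp add: distrib_left sum.distrib abs_triangle_ineq)
  then have "ennreal \<bar>\<Sum>k\<in>?Z. x k * (y k + z k)\<bar> \<le> ennreal \<bar>\<Sum>k\<in>?Z. x k * y k\<bar> + ennreal \<bar>\<Sum>k\<in>?Z. x k * z k\<bar>"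
    by (simp add: ennreal_plus[symmetric] ennreal_leI del: ennreal_plus)
  also have "\<dots> \<le> (SUP x\<in>{x \<in> c00 I. lower_norm Fam x \<le> 1}. ennreal \<bar>\<Sum>k\<in>{k. x k \<noteq> 0}. x k * y k\<bar>)
      + (SUP x\<in>{x \<in> c00 I. lower_norm Fam x \<le> 1}. ennreal \<bar>\<Sum>k\<in>{k. x k \<noteq> 0}. x k * z k\<bar>)"
    by (intro add_mono SUP_upper x)
  finally show "ennreal \<bar>\<Sum>k\<in>?Z. x k * (y k + z k)\<bar> \<le> \<dots>" .
qed

lemma dual_sum: fixes n :: nat shows "dual_norm I Fam (\<lambda>k. \<Sum>i\<le>n. y i k) \<le> (\<Sum>i\<le>n. dual_norm I Fam (y i))"
proof (induction n)
  case 0 then show ?case by simp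
next
  case (Suc n)
  have "dual_norm I Fam (\<lambda>k. \<Sum>i\<le>Suc n. y i k) = dual_norm I Fam (\<lambda>k. (\<Sum>i\<le>n. y i k) + y (Suc n) k)"
    by simp
  also have "\<dots> \<le> dual_norm I Fam (\<lambda>k. \<Sum>i\<le>n. y i k) + dual_norm I Fam (y (Suc n))"
    using dual_sub[of I Fam "\<lambda>k. \<Sum>i\<le>n. y i k" "y (Suc n)"] by simp
  also have "\<dots> \<le> (\<Sum>i\<le>n. dual_norm I Fam (y i)) + dual_norm I Fam (y (Suc n))"
    using Suc by (simp add: add_right_mono)
  finally show ?case by simp
qed

lemma iso_imp_const:
  assumes "upper_iso_dual I Fam"
  shows "\<exists>C::real. C > 0 \<and>
       (\<forall>(n::nat) xs. (\<forall>i\<le>n. xs i \<in> c00 I) \<longrightarrow>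
          upper_norm I Fam (\<lambda>k. \<Sum>i\<le>n. xs i k) \<le> ennreal C * (\<Sum>i\<le>n. upper_norm I Fam (xs i)))"
proof -
  obtain T c C where cC: "c > 0" "C > 0"
    and lin: "\<forall>x\<in>c00 I. \<forall>y\<in>c00 I. \<forall>a b::real. T (\<lambda>k. a * x k + b * y k) = (\<lambda>k. a * T x k + b * T y k)"
    and bd: "\<forall>x\<in>c00 I. ennreal c * upper_norm I Fam x \<le> dual_norm I Fam (T x)
                 \<and> dual_norm I Fam (T x) \<le> ennreal C * upper_norm I Fam x"
    using assms unfolding upper_iso_dual_def by blast
  show ?thesis
  proof (intro exI[of _ "C / c"] conjI allI impI)
    show "C / c > 0" using cC by simp
    fix n xs assume xs: "\<forall>i\<le>(n::nat). xs i \<in> c00 I"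
    let ?S = "\<lambda>k. \<Sum>i\<le>n. xs i k"
    have "?S \<in> c00 I" using xs by (rule c00_sum)
    then have "ennreal c * upper_norm I Fam ?S \<le> dual_norm I Fam (T ?S)" using bd by blast
    also have "T ?S = (\<lambda>k. \<Sum>i\<le>n. T (xs i) k)" using T_sum[OF lin] xs by blast
    also have "dual_norm I Fam (\<lambda>k. \<Sum>i\<le>n. T (xs i) k) \<le> (\<Sum>i\<le>n. dual_norm I Fam (T (xs i)))"
      by (rule dual_sum)
    also have "\<dots> \<le> (\<Sum>i\<le>n. ennreal C * upper_norm I Fam (xs i))"
      by (rule sum_mono) (use bd xs in auto)
    also have "\<dots> = ennreal C * (\<Sum>i\<le>n. upper_norm I Fam (xs i))" by (simp add: sum_distrib_left)
    finally have le: "ennreal c * upper_norm I Fam ?S \<le> ennreal C * (\<Sum>i\<le>n. upper_norm I Fam (xs i))" .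
    have "upper_norm I Fam ?S = ennreal (1 / c) * (ennreal c * upper_norm I Fam ?S)"
      using cC by (simp add: mult.assoc[symmetric] ennreal_mult[symmetric])
    also have "\<dots> \<le> ennreal (1 / c) * (ennreal C * (\<Sum>i\<le>n. upper_norm I Fam (xs i)))"
      by (rule mult_left_mono[OF le]) simp
    also have "\<dots> = ennreal (C / c) * (\<Sum>i\<le>n. upper_norm I Fam (xs i))"
      using cC by (simp add: mult.assoc[symmetric] ennreal_mult[symmetric])
    finally show "upper_norm I Fam ?S \<le> ennreal (C / c) * (\<Sum>i\<le>n. upper_norm I Fam (xs i))" .
  qed
qed

theorem mainTheorem12:
  shows "(\<forall>N. upper_norm (TN N) (FamN N) (xN N) = ennreal (2 ^ N * (1 + real N / 2))
              \<and> (\<forall>s. length s = N \<longrightarrow> upper_norm (TN N) (FamN N) (indicator (Fs s)) = 1))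
       \<and> (compact_family Tall Famall \<and> hereditary Famall \<and> (\<forall>A\<in>Famall. finite A)
              \<and> covers Tall Famall)
       \<and> \<not> (\<exists>C::real. C > 0 \<and>
               (\<forall>(n::nat) (xs::nat \<Rightarrow> nat \<times> bool list \<Rightarrow> real).
                  (\<forall>i\<le>n. xs i \<in> c00 Tall) \<longrightarrow>
                  upper_norm Tall Famall (\<lambda>k. \<Sum>i\<le>n. xs i k)
                    \<le> ennreal C * (\<Sum>i\<le>n. upper_norm Tall Famall (xs i))))
       \<and> \<not> upper_iso_dual Tall Famall"
proof (intro conjI allI impI)
  fix N show "upper_norm (TN N) (FamN N) (xN N) = ennreal (2 ^ N * (1 + real N / 2))" by (rule TN_norm)
next
  fix N s assume s: "length (s::bool list) = N"
  show "upper_norm (TN N) (FamN N) (indicator (Fs s)) = 1"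
  proof (rule ind_norm)
    show "Fs s \<in> FamN N" using FamN_props(4) s .
    show "Fs s \<subseteq> TN N" using Fs_sub_TN s .
    have "[] \<in> Fs s" by (simp add: mem_Fs)
    then show "Fs s \<noteq> {}" by blast
  qed (use FamN_props(1,2,3) in simp_all)
next
  show "compact_family Tall Famall" by (rule compact_all)
  show "hereditary Famall" by (rule Famall_props(5))
  show "\<forall>A\<in>Famall. finite A" by (rule Famall_props(3))
  show "covers Tall Famall" by (rule Famall_props(6))
  show "\<not> (\<exists>C::real. C > 0 \<and>
               (\<forall>(n::nat) (xs::nat \<Rightarrow> nat \<times> bool list \<Rightarrow> real).
                  (\<forall>i\<le>n. xs i \<in> c00 Tall) \<longrightarrow>
                  upper_norm Tall Famall (\<lambda>k. \<Sum>i\<le>n. xs i k)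
                    \<le> ennreal C * (\<Sum>i\<le>n. upper_norm Tall Famall (xs i))))" by (rule no_const)
  show "\<not> upper_iso_dual Tall Famall" using no_const iso_imp_const by blast
qed

end
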